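(* The Lie group $(\delta+\mathbb{K}^m\langle\langle X\rangle\rangle,\circ,\delta)$ (Fréchet topology) is $C^0$-regular.
   Context: $\mathbb{K}\in\{\mathbb{R},\mathbb{C}\}$. $X=\{x_0,x_1,\ldots,x_m\}$ is a finite alphabet, $X^\ast$ its words (including $\emptyset$). $\mathbb{K}^m\langle\langle X\rangle\rangle$ is the space of maps $X^\ast\to\mathbb{K}^m$ with the Fréchet (product) topology; $d[i]$ is the $i$-th component of $d$. $\delta+\mathbb{K}^m\langle\langle X\rangle\rangle=\{\delta+c\}$, $\delta$ a formal symbol, an affine space modelled on $\mathbb{K}^m\langle\langle X\rangle\rangle$. The shuffle product $\sqcup\!\sqcup$ is determined on words by $(x_i\eta)\sqcup\!\sqcup(x_j\xi)=x_i(\eta\sqcup\!\sqcup(x_j\xi))+x_j((x_i\eta)\sqcup\!\sqcup\xi)$, $\eta\sqcup\!\sqcup\emptyset=\emptyset\sqcup\!\sqcup\eta=\eta$. Mixed composition: with $d[0]:=0$, $\phi_d(\emptyset)=\mathrm{id}$, $\phi_d(x_i\eta)=\phi_d(x_i)\circ\phi_d(\eta)$, $\phi_d(x_i)(e)=x_ie+x_0(d[i]\sqcup\!\sqcup e)$, $c\,\tilde\circ\,d_\delta=\sum_\eta(c,\eta)\phi_d(\eta)(1\cdot\emptyset)$; group product $(\delta+c)\circ(\delta+d)=\delta+d+c\,\tilde\circ\,d_\delta$, identity $\delta$; this is an analytic Lie group with Lie algebra $\mathbb{K}^m\langle\langle X\rangle\rangle$. A Lie group $G$ with unit $1$ and Lie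 algebra $\mathbf{L}(G)$ is $C^0$-regular if for every continuous curve $u\colon[0,1]\to\mathbf{L}(G)$ the initial value problem $\dot\gamma(t)=T\lambda_{\gamma(t)}(u(t))$, $\gamma(0)=1$ (with $\lambda_g(h)=gh$) has a $C^1$-solution $\mathrm{Evol}(u)\colon[0,1]\to G$, and the map $\mathrm{evol}\colon C^0([0,1],\mathbf{L}(G))\to G$, $u\mapsto\mathrm{Evol}(u)(1)$, is smooth (Bastiani sense), where $C^0([0,1],\mathbf{L}(G))$ carries the compact-open topology. *)

theory Defs
  imports "HOL-Analysis.Analysis"
begin

text \<open>Alphabet X = {x_0,...,x_m} is encoded as 'n option with 'n finite, m = CARD('n):
  None = x_0, Some i = x_i.  K-valued series are maps
  words => 'a, K^m-valued series are maps words => 'n => 'a (component d w i = (d,w)[i]).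
  The Frechet (product) topology is the product topology of the function type.
  A group element delta + c is represented by c; delta corresponds to 0.\<close>

type_synonym ('n,'a) sser = "'n option list \<Rightarrow> 'a"
type_synonym ('n,'a) vser = "'n option list \<Rightarrow> 'n \<Rightarrow> 'a"

fun shw :: "'b list \<Rightarrow> 'b list \<Rightarrow> 'b list list" where
  "shw [] ys = [ys]"
| "shw xs [] = [xs]"
| "shw (x#xs) (y#ys) = map ((#) x) (shw xs (y#ys)) @ map ((#) y) (shw (x#xs) ys)"

definition shuffle :: "('n::finite,'a::comm_ring_1) sser \<Rightarrow> ('n,'a) sser \<Rightarrow> ('n,'a) sser" where
  "shuffle c e = (\<lambda>\<nu>. \<Sum>p\<in>{(\<alpha>,\<beta>). length \<alpha> + length \<beta> = length \<nu>}.
      c (fst p) * e (snd p) * of_nat (count_list (shw (fst p) (snd p)) \<nu>))"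

definition lcat :: "'n option \<Rightarrow> ('n,'a::zero) sser \<Rightarrow> ('n,'a) sser" where
  "lcat x e = (\<lambda>w. case w of [] \<Rightarrow> 0 | y # w' \<Rightarrow> (if y = x then e w' else 0))"

definition dcomp :: "('n,'a::zero) vser \<Rightarrow> 'n option \<Rightarrow> ('n,'a) sser" where
  "dcomp d x = (case x of None \<Rightarrow> (\<lambda>w. 0) | Some i \<Rightarrow> (\<lambda>w. d w i))"

definition phiL :: "('n::finite,'a::comm_ring_1) vser \<Rightarrow> 'n option \<Rightarrow> ('n,'a) sser \<Rightarrow> ('n,'a) sser" where
  "phiL d x e = (\<lambda>w. lcat x e w + lcat None (shuffle (dcomp d x) e) w)"

fun phi :: "('n::finite,'a::comm_ring_1) vser \<Rightarrow> 'n option list \<Rightarrow> ('n,'a) sser" where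
  "phi d [] = (\<lambda>w. if w = [] then 1 else 0)"
| "phi d (x # \<eta>) = phiL d x (phi d \<eta>)"

definition mcomp :: "('n::finite,'a::real_normed_field) vser \<Rightarrow> ('n,'a) vser \<Rightarrow> ('n,'a) vser" where
  "mcomp c d = (\<lambda>\<nu> k. \<Sum>\<^sub>\<infinity>\<eta>. c \<eta> k * phi d \<eta> \<nu>)"

text \<open>Group product (delta + c) o (delta + d) = delta + d + c ~o d_delta.\<close>
definition gmul :: "('n::finite,'a::real_normed_field) vser \<Rightarrow> ('n,'a) vser \<Rightarrow> ('n,'a) vser" where
  "gmul c d = (\<lambda>\<nu> k. d \<nu> k + mcomp c d \<nu> k)"

text \<open>C^0([0,1], L(G)): continuous curves on [0,1], extended by 0 outside [0,1].\<close>
definition C0set :: "(real \<Rightarrow> ('n,'a::real_normed_field) vser) set" where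
  "C0set = {u. continuous_on {0..1} u \<and> (\<forall>t. t \<notin> {0..1} \<longrightarrow> u t = (\<lambda>\<nu> k. 0))}"

definition CO_top :: "(real \<Rightarrow> ('n,'a::real_normed_field) vser) topology" where
  "CO_top = subtopology
     (topology_generated_by {{u. u ` K \<subseteq> U} | K U. compact K \<and> K \<subseteq> {0..1} \<and> open U})
     C0set"

text \<open>Bastiani smoothness (over K) of a map C^0([0,1],L(G)) -> L(G):
  D k u vs = d^k F(u; vs 0, ..., vs (k-1)) exist as iterated directional derivatives
  and are continuous on C^0 x (C^0)^k.\<close>
definition bastiani_smooth :: "((real \<Rightarrow> ('n,'a::real_normed_field) vser) \<Rightarrow> ('n,'a) vser) \<Rightarrow> bool" where
  "bastiani_smooth F \<longleftrightarrow>
    (\<exists>D :: nat \<Rightarrow> (real \<Rightarrow> ('n,'a) vser) \<Rightarrow> (nat \<Rightarrow> real \<Rightarrow> ('n,'a) vser) \<Rightarrow> ('n,'a) vser.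
      (\<forall>u\<in>C0set. D 0 u (\<lambda>_. undefined) = F u) \<and>
      (\<forall>k. continuous_map (prod_topology CO_top (product_topology (\<lambda>_. CO_top) {..<k}))
              euclidean (\<lambda>(u, vs). D k u vs)) \<and>
      (\<forall>k u vs v. u \<in> C0set \<and> vs \<in> PiE {..<k} (\<lambda>_. C0set) \<and> v \<in> C0set \<longrightarrow>
         ((\<lambda>s::'a. (\<lambda>\<nu> i. (D k (\<lambda>t \<nu>' j. u t \<nu>' j + s * v t \<nu>' j) vs \<nu> i - D k u vs \<nu> i) / s))
            \<longlongrightarrow> D (Suc k) u (vs(k := v))) (at 0)))"

definition C1_on01 :: "(real \<Rightarrow> ('n,'a::real_normed_field) vser) \<Rightarrow> (real \<Rightarrow> ('n,'a) vser) \<Rightarrow> bool" where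
  "C1_on01 \<gamma> \<gamma>' \<longleftrightarrow> continuous_on {0..1} \<gamma>' \<and>
     (\<forall>t\<in>{0..1}. ((\<lambda>s. (\<lambda>\<nu> k. (\<gamma> s \<nu> k - \<gamma> t \<nu> k) / of_real (s - t))) \<longlongrightarrow> \<gamma>' t)
                    (at t within {0..1}))"

text \<open>gamma is a C^1 solution of gamma' = T lambda_{gamma(t)} (u(t)), gamma(0) = 1 = delta;
  T lambda_g (u) is the derivative at s = 0 of s |-> g o (delta + s u).\<close>
definition solves_evol :: "(real \<Rightarrow> ('n::finite,'a::real_normed_field) vser) \<Rightarrow> (real \<Rightarrow> ('n,'a) vser) \<Rightarrow> bool" where
  "solves_evol u \<gamma> \<longleftrightarrow> \<gamma> 0 = (\<lambda>\<nu> k. 0) \<and>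
     (\<exists>\<gamma>'. C1_on01 \<gamma> \<gamma>' \<and>
        (\<forall>t\<in>{0..1}. ((\<lambda>s::real. (\<lambda>\<nu> k. (gmul (\<gamma> t) (\<lambda>\<nu>' j. of_real s * u t \<nu>' j) \<nu> k - \<gamma> t \<nu> k) / of_real s))
                       \<longlongrightarrow> \<gamma>' t) (at 0)))"

definition C0_regular_G :: "'n::finite itself \<Rightarrow> 'a::real_normed_field itself \<Rightarrow> bool" where
  "C0_regular_G _ _ \<longleftrightarrow>
     (\<forall>u\<in>(C0set :: (real \<Rightarrow> ('n,'a) vser) set). \<exists>\<gamma>. solves_evol u \<gamma>) \<and>
     (\<exists>F :: (real \<Rightarrow> ('n,'a) vser) \<Rightarrow> ('n,'a) vser. bastiani_smooth F \<and>
        (\<forall>u\<in>C0set. \<forall>\<gamma>. solves_evol u \<gamma> \<longrightarrow> F u = \<gamma> 1))"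

end

theory Submission
  imports Defs
begin


section \<open>Combinatorics of phi\<close>

lemma shw_mset: "w \<in> set (shw xs ys) \<Longrightarrow> mset w = mset xs + mset ys"
  by (induction xs ys arbitrary: w rule: shw.induct) auto

lemma finite_words_le: "finite {\<eta>::'n::finite option list. length \<eta> \<le> n}"
  using finite_lists_length_le[of "UNIV::'n option set" n] by simp
lemma finite_pairs: "finite {(\<alpha>::'n::finite option list, \<beta>::'n option list). length \<alpha> + length \<beta> = n}"
proof -
  have "{(\<alpha>::'n option list, \<beta>::'n option list). length \<alpha> + length \<beta> = n}
     \<subseteq> {xs::'n option list. length xs \<le> n} \<times> {xs::'n option list. length xs \<le> n}" by auto
  moreover have "finite ({xs::'n option list. length xs \<le> n} \<times> {xs::'n option list. length xs \<le> n})"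
    using finite_words_le[of n] by (intro finite_cartesian_product)
  ultimately show ?thesis by (rule finite_subset)
qed
definition wt :: "'n option list \<Rightarrow> nat" where
  "wt \<nu> = length \<nu> + count_list \<nu> None"

lemma lcat_simps[simp]: "lcat x e [] = 0" "lcat x e (y # w) = (if y = x then e w else 0)"
  by (auto simp: lcat_def)

lemma shuffle_zero_left[simp]: "shuffle (\<lambda>w. 0) e = (\<lambda>w. 0)"
  by (auto simp: shuffle_def)

lemma dcomp_zero[simp]: "dcomp (\<lambda>\<nu> j. 0) x = (\<lambda>w. 0)"
  by (auto simp: dcomp_def split: option.splits)

lemma phi_zero: "phi (\<lambda>\<nu> j. (0::'a::comm_ring_1)) \<eta> = (\<lambda>w. if w = \<eta> then 1 else 0)"
proof (induction \<eta>)
  case Nil then show ?case by simp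
next
  case (Cons x \<eta>)
  show ?case
  proof
    fix w show "phi (\<lambda>\<nu> j. 0) (x # \<eta>) w = (if w = x # \<eta> then (1::'a) else 0)"
      by (cases w) (auto simp: phiL_def Cons.IH lcat_def)
  qed
qed

lemma phi_len: "phi d \<eta> \<nu> \<noteq> 0 \<Longrightarrow> length \<eta> \<le> length \<nu>"
proof (induction \<eta> arbitrary: \<nu>)
  case Nil then show ?case by simp
next
  case (Cons x \<eta>)
  show ?case
  proof (cases \<nu>)
    case Nil with Cons show ?thesis by (simp add: phiL_def)
  next
    case (Cons y w)
    show ?thesis
    proof (cases "phi d \<eta> w \<noteq> 0 \<and> y = x")
      case True with Cons.IH Cons show ?thesis by auto
    next
      case False
      with Cons.prems Cons have "shuffle (dcomp d x) (phi d \<eta>) w \<noteq> 0"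
        by (auto simp: phiL_def split: if_splits)
      then obtain p where p: "p \<in> {(\<alpha>,\<beta>). length \<alpha> + length \<beta> = length w}"
        "dcomp d x (fst p) * phi d \<eta> (snd p) * of_nat (count_list (shw (fst p) (snd p)) w) \<noteq> 0"
        unfolding shuffle_def by (meson sum.not_neutral_contains_not_neutral)
      then have "phi d \<eta> (snd p) \<noteq> 0" by auto
      then have "length \<eta> \<le> length (snd p)" by (rule Cons.IH)
      with p(1) Cons show ?thesis by auto
    qed
  qed
qed

fun dphi :: "('n::finite,'a::comm_ring_1) vser \<Rightarrow> 'n option list \<Rightarrow> ('n,'a) sser" where
  "dphi u [] = (\<lambda>w. 0)"
| "dphi u (x # \<eta>) = (\<lambda>w. lcat x (dphi u \<eta>) w + lcat None (shuffle (dcomp u x) (\<lambda>w. if w = \<eta> then 1 else 0)) w)"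

lemma dcomp_scale: "dcomp (\<lambda>\<nu> j. (c::'a::comm_ring_1) * u \<nu> j) x = (\<lambda>w. c * dcomp u x w)"
  by (auto simp: dcomp_def fun_eq_iff split: option.splits)

lemma phi_deriv:
  fixes u :: "('n::finite,'a::real_normed_field) vser"
  shows "((\<lambda>c. phi (\<lambda>\<nu> j. c * u \<nu> j) \<eta> \<nu>) has_field_derivative dphi u \<eta> \<nu>) (at 0)"
proof (induction \<eta> arbitrary: \<nu>)
  case Nil then show ?case by simp
next
  case (Cons x \<eta>)
  show ?case
  proof (cases \<nu>)
    case Nil then show ?thesis by (simp add: phiL_def)
  next
    case (Cons y w)
    define Pr where "Pr = {(\<alpha>::'n option list, \<beta>::'n option list). length \<alpha> + length \<beta> = length w}"
    have sh: "\<And>c. shuffle (dcomp (\<lambda>\<nu> j. c * u \<nu> j) x) (phi (\<lambda>\<nu> j. c * u \<nu> j) \<eta>) w =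
       (\<Sum>p\<in>Pr. c * dcomp u x (fst p) * phi (\<lambda>\<nu> j. c * u \<nu> j) \<eta> (snd p) * of_nat (count_list (shw (fst p) (snd p)) w))"
      by (simp add: shuffle_def dcomp_scale Pr_def)
    have sh0: "shuffle (dcomp u x) (\<lambda>w. if w = \<eta> then 1 else 0) w =
       (\<Sum>p\<in>Pr. dcomp u x (fst p) * phi (\<lambda>\<nu> j. 0 * u \<nu> j) \<eta> (snd p) * of_nat (count_list (shw (fst p) (snd p)) w))"
      by (simp add: shuffle_def Pr_def phi_zero)
    have d1: "((\<lambda>c. shuffle (dcomp (\<lambda>\<nu> j. c * u \<nu> j) x) (phi (\<lambda>\<nu> j. c * u \<nu> j) \<eta>) w) has_field_derivative
         shuffle (dcomp u x) (\<lambda>w. if w = \<eta> then 1 else 0) w) (at 0)"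
      unfolding sh sh0
      by (rule DERIV_sum, rule DERIV_cong, (rule derivative_eq_intros Cons.IH refl)+, simp)
    have A: "((\<lambda>c. if y = x then phi (\<lambda>\<nu> j. c * u \<nu> j) \<eta> w else 0) has_field_derivative
        (if y = x then dphi u \<eta> w else 0)) (at 0)"
      by (cases "y = x") (simp_all add: Cons.IH)
    have B: "((\<lambda>c. if y = None then shuffle (dcomp (\<lambda>\<nu> j. c * u \<nu> j) x) (phi (\<lambda>\<nu> j. c * u \<nu> j) \<eta>) w else 0)
        has_field_derivative (if y = None then shuffle (dcomp u x) (\<lambda>w. if w = \<eta> then 1 else 0) w else 0)) (at 0)"
      by (cases y) (simp_all add: d1)
    from DERIV_add[OF A B] show ?thesis
      unfolding Cons by (simp add: phiL_def)
  qed
qed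

lemma dphi_simp: "dphi u (x # \<eta>) (y # w) = (if y = x then dphi u \<eta> w else 0) +
   (if y = None then shuffle (dcomp u x) (\<lambda>w. if w = \<eta> then 1 else 0) w else 0)"
  by simp

lemma dphi_Nil[simp]: "dphi u \<eta> [] = 0"
  by (cases \<eta>) auto

lemma wt_Cons: "wt (x # l) = Suc (length l + count_list l None) + (if x = None then 1 else 0)"
  by (simp add: wt_def)

lemma dphi_wt: "dphi u \<eta> \<nu> \<noteq> 0 \<Longrightarrow> length \<eta> \<le> length \<nu> \<and> wt \<eta> < wt \<nu>"
proof (induction \<eta> arbitrary: \<nu>)
  case Nil then show ?case by simp
next
  case (Cons x \<eta>)
  show ?case
  proof (cases \<nu>)
    case Nil with Cons show ?thesis by simp
  next
    case (Cons y w)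
    show ?thesis
    proof (cases "y = x \<and> dphi u \<eta> w \<noteq> 0")
      case True
      with Cons.IH[of w] show ?thesis unfolding Cons by (auto simp: wt_def)
    next
      case False
      with Cons.prems Cons have yN: "y = None" and
        sh: "shuffle (dcomp u x) (\<lambda>w. if w = \<eta> then 1 else 0) w \<noteq> 0"
        by (auto simp: dphi_simp split: if_splits)
      then obtain p where p: "p \<in> {(\<alpha>,\<beta>). length \<alpha> + length \<beta> = length w}"
        "dcomp u x (fst p) * (if snd p = \<eta> then 1 else 0) * of_nat (count_list (shw (fst p) (snd p)) w) \<noteq> 0"
        unfolding shuffle_def by (meson sum.not_neutral_contains_not_neutral)
      then have xS: "x \<noteq> None" by (cases x) (auto simp: dcomp_def)
      from p have sp: "snd p = \<eta>" by (auto split: if_splits)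
      from p(2) have "count_list (shw (fst p) (snd p)) w \<noteq> 0" by (metis mult_zero_right of_nat_0)
      then have "w \<in> set (shw (fst p) \<eta>)" using sp by (simp add: count_list_0_iff)
      then have m: "mset w = mset (fst p) + mset \<eta>" by (rule shw_mset)
      then have l: "length w = length (fst p) + length \<eta>"
        by (metis size_mset size_union)
      from m have c: "count_list w None = count_list (fst p) None + count_list \<eta> None"
        by (metis count_mset count_union)
      show ?thesis unfolding Cons yN using xS l c by (auto simp: wt_def)
    qed
  qed
qed

definition finlin :: "(('n,'a::comm_ring_1) vser \<Rightarrow> 'a) \<Rightarrow> bool" where
  "finlin L \<longleftrightarrow> (\<exists>S a. finite S \<and> (\<forall>x. L x = (\<Sum>c\<in>S. a c * x (fst c) (snd c))))"

lemma finlin_zero[simp]: "finlin (\<lambda>x. 0)"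
  unfolding finlin_def by (rule exI[of _ "{}"]) auto

lemma finlin_coord[simp]: "finlin (\<lambda>x. x \<alpha> i)"
  unfolding finlin_def by (rule exI[of _ "{(\<alpha>,i)}"], rule exI[of _ "\<lambda>_. 1"]) auto

lemma finlin_cmult: "finlin L \<Longrightarrow> finlin (\<lambda>x. b * L x)"
  unfolding finlin_def
  by (auto simp: sum_distrib_left mult.assoc intro!: exI[of _ "\<lambda>c. b * _ c"])

lemma finlin_multc: "finlin L \<Longrightarrow> finlin (\<lambda>x. L x * b)"
  using finlin_cmult[of L b] by (simp add: mult.commute)

lemma finlin_add:
  assumes "finlin L1" "finlin L2" shows "finlin (\<lambda>x. L1 x + L2 x)"
proof -
  from assms obtain S1 a1 S2 a2 where f: "finite S1" "finite S2"
    and e1: "\<And>x. L1 x = (\<Sum>c\<in>S1. a1 c * x (fst c) (snd c))"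
    and e2: "\<And>x. L2 x = (\<Sum>c\<in>S2. a2 c * x (fst c) (snd c))"
    unfolding finlin_def by blast
  define b where "b c = (if c \<in> S1 then a1 c else 0) + (if c \<in> S2 then a2 c else 0)" for c
  have "L1 x + L2 x = (\<Sum>c\<in>S1 \<union> S2. b c * x (fst c) (snd c))" for x
  proof -
    have "L1 x = (\<Sum>c\<in>S1 \<union> S2. (if c \<in> S1 then a1 c else 0) * x (fst c) (snd c))"
      unfolding e1 using f by (intro sum.mono_neutral_cong_left) auto
    moreover have "L2 x = (\<Sum>c\<in>S1 \<union> S2. (if c \<in> S2 then a2 c else 0) * x (fst c) (snd c))"
      unfolding e2 using f by (intro sum.mono_neutral_cong_left) auto
    ultimately show ?thesis by (simp add: b_def distrib_right sum.distrib)
  qed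
  with f show ?thesis unfolding finlin_def by blast
qed

lemma finlin_sum: "finite I \<Longrightarrow> (\<And>i. i \<in> I \<Longrightarrow> finlin (L i)) \<Longrightarrow> finlin (\<lambda>x. \<Sum>i\<in>I. L i x)"
  by (induction I rule: finite_induct) (auto intro: finlin_add)

lemma finlin_if: "finlin L \<Longrightarrow> finlin (\<lambda>x. if b then L x else 0)"
  by (cases b) auto

lemma finlin_dcomp: "finlin (\<lambda>x. dcomp x z \<alpha>)"
  by (cases z) (auto simp: dcomp_def)

lemma finlin_dphi: "finlin (\<lambda>x. dphi x \<eta> \<nu>)"
proof (induction \<eta> arbitrary: \<nu>)
  case Nil then show ?case by simp
next
  case (Cons z \<eta>)
  show ?case
  proof (cases \<nu>)
    case Nil then show ?thesis by simp
  next
    case (Cons y w)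
    show ?thesis unfolding Cons dphi_simp shuffle_def
      by (intro finlin_add finlin_if Cons.IH finlin_sum finite_pairs finlin_multc finlin_dcomp)
  qed
qed

definition Pw :: "'n option list \<Rightarrow> 'n option list set" where
  "Pw \<nu> = {\<eta>. length \<eta> \<le> length \<nu> \<and> wt \<eta> < wt \<nu>}"

lemma finite_Pw: "finite (Pw (\<nu>::'n::finite option list))"
  unfolding Pw_def by (rule finite_subset[OF _ finite_words_le]) auto

lemma mcomp_fin: "mcomp c d \<nu> k = (\<Sum>\<eta>\<in>{\<eta>. length \<eta> \<le> length \<nu>}. c \<eta> k * phi d \<eta> \<nu>)"
proof -
  have "mcomp c d \<nu> k = infsum (\<lambda>\<eta>. c \<eta> k * phi d \<eta> \<nu>) {\<eta>. length \<eta> \<le> length \<nu>}"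
    unfolding mcomp_def by (rule infsum_cong_neutral) (use phi_len in force)+
  also have "\<dots> = (\<Sum>\<eta>\<in>{\<eta>. length \<eta> \<le> length \<nu>}. c \<eta> k * phi d \<eta> \<nu>)"
    by (rule infsum_finite) (rule finite_words_le)
  finally show ?thesis .
qed

lemma filterlim_of_real_0: "filterlim (of_real :: real \<Rightarrow> 'a::real_normed_algebra_1) (at 0) (at 0)"
proof (rule filterlim_atI)
  show "((of_real :: real \<Rightarrow> 'a) \<longlongrightarrow> 0) (at 0)"
    using tendsto_of_real[OF tendsto_ident_at[of 0 UNIV]] by simp
  show "\<forall>\<^sub>F x in at 0. (of_real x :: 'a) \<noteq> 0"
    by (auto simp: eventually_at_filter)
qed

lemma tangent_lim:
  fixes c x :: "('n::finite,'a::real_normed_field) vser"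
  shows "((\<lambda>s::real. (gmul c (\<lambda>\<nu>' j. of_real s * x \<nu>' j) \<nu> k - c \<nu> k) / of_real s)
          \<longlongrightarrow> x \<nu> k + (\<Sum>\<eta>\<in>Pw \<nu>. c \<eta> k * dphi x \<eta> \<nu>)) (at 0)"
proof -
  define W where "W = {\<eta>::'n option list. length \<eta> \<le> length \<nu>}"
  have fW: "finite W" unfolding W_def by (rule finite_words_le)
  define h where "h z = z * x \<nu> k + (\<Sum>\<eta>\<in>W. c \<eta> k * phi (\<lambda>\<nu> j. z * x \<nu> j) \<eta> \<nu>)" for z
  have hd: "(h has_field_derivative (x \<nu> k + (\<Sum>\<eta>\<in>W. c \<eta> k * dphi x \<eta> \<nu>))) (at 0)"
    unfolding h_def by (auto intro!: derivative_eq_intros phi_deriv) (simp add: mult.commute)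
  have h0: "h 0 = c \<nu> k"
  proof -
    have "h 0 = (\<Sum>\<eta>\<in>W. c \<eta> k * (if \<nu> = \<eta> then 1 else 0))"
      unfolding h_def by (simp add: phi_zero)
    also have "\<dots> = c \<nu> k" using fW by (simp add: W_def if_distrib cong: if_cong)
    finally show ?thesis .
  qed
  have e1: "(\<Sum>\<eta>\<in>W. c \<eta> k * dphi x \<eta> \<nu>) = (\<Sum>\<eta>\<in>Pw \<nu>. c \<eta> k * dphi x \<eta> \<nu>)"
    using fW by (intro sum.mono_neutral_right) (auto simp: W_def Pw_def dest: dphi_wt)
  have lim: "((\<lambda>z. (h z - h 0) / (z - 0)) \<longlongrightarrow> x \<nu> k + (\<Sum>\<eta>\<in>W. c \<eta> k * dphi x \<eta> \<nu>)) (at 0)"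
    using hd by (simp add: has_field_derivative_iff)
  have "((\<lambda>s::real. (h (of_real s) - h 0) / (of_real s - 0)) \<longlongrightarrow> x \<nu> k + (\<Sum>\<eta>\<in>W. c \<eta> k * dphi x \<eta> \<nu>)) (at 0)"
    using filterlim_compose[OF lim filterlim_of_real_0] by (simp add: o_def)
  moreover have "(\<lambda>s::real. (gmul c (\<lambda>\<nu>' j. of_real s * x \<nu>' j) \<nu> k - c \<nu> k) / of_real s) = (\<lambda>s. (h (of_real s) - h 0) / (of_real s - 0))"
    unfolding gmul_def mcomp_fin h0 by (simp add: h_def W_def)
  ultimately show ?thesis using e1 by simp
qed




datatype ('n,'a) tm = Cst 'a | Plus "('n,'a) tm" "('n,'a) tm" | Times "('n,'a) tm" "('n,'a) tm"
  | Integ "('n,'a) tm" | Lin nat "('n,'a) vser \<Rightarrow> 'a"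

type_synonym ('n,'a) env = "nat \<Rightarrow> real \<Rightarrow> ('n,'a) vser"

primrec ev :: "('n,'a::{real_normed_field,banach}) tm \<Rightarrow> ('n,'a) env \<Rightarrow> real \<Rightarrow> 'a" where
  "ev (Cst a) E t = a"
| "ev (Plus a b) E t = ev a E t + ev b E t"
| "ev (Times a b) E t = ev a E t * ev b E t"
| "ev (Integ a) E t = integral {0..t} (ev a E)"
| "ev (Lin j L) E t = L (E j t)"

primrec wft :: "('n,'a::comm_ring_1) tm \<Rightarrow> nat \<Rightarrow> bool" where
  "wft (Cst a) m = True"
| "wft (Plus a b) m = (wft a m \<and> wft b m)"
| "wft (Times a b) m = (wft a m \<and> wft b m)"
| "wft (Integ a) m = wft a m"
| "wft (Lin j L) m = (j < m \<and> finlin L)"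

lemma wf_mono: "wft e m \<Longrightarrow> m \<le> m' \<Longrightarrow> wft e m'"
  by (induction e) auto

definition goodE :: "('n,'a::real_normed_field) env \<Rightarrow> bool" where
  "goodE E \<longleftrightarrow> (\<forall>j \<nu> i. continuous_on {0..1} (\<lambda>t. E j t \<nu> i))"

lemma ev_cong: "wft e m \<Longrightarrow> (\<And>j. j < m \<Longrightarrow> E j = E' j) \<Longrightarrow> ev e E = ev e E'"
  by (induction e) auto

lemma finlin_repr: "finlin L \<Longrightarrow> \<exists>S a. finite S \<and> (\<forall>x. L x = (\<Sum>c\<in>S. a c * x (fst c) (snd c)))"
  by (simp add: finlin_def)

lemma finlin_lin: "finlin L \<Longrightarrow> L (\<lambda>\<nu> i. x \<nu> i + s * y \<nu> i) = L x + s * L y"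
  by (auto simp: finlin_def sum.distrib sum_distrib_left algebra_simps)

lemma finlin_cont:
  fixes L :: "('n,'a::real_normed_field) vser \<Rightarrow> 'a"
  assumes "finlin L" "\<And>\<nu> i. continuous_on S (\<lambda>t. f t \<nu> i)"
  shows "continuous_on S (\<lambda>t. L (f t))"
proof -
  from assms(1) obtain C a where "finite C" and e: "\<And>x. L x = (\<Sum>c\<in>C. a c * x (fst c) (snd c))"
    unfolding finlin_def by blast
  show ?thesis unfolding e by (intro continuous_intros assms(2))
qed

lemma ev_fun: "ev (Plus a b) E = (\<lambda>t. ev a E t + ev b E t)" "ev (Times a b) E = (\<lambda>t. ev a E t * ev b E t)"
  "ev (Integ a) E = (\<lambda>t. integral {0..t} (ev a E))" "ev (Lin j L) E = (\<lambda>t. L (E j t))" "ev (Cst c) E = (\<lambda>t. c)"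
  by (auto simp: fun_eq_iff)

lemma ev_cont: "wft e m \<Longrightarrow> goodE E \<Longrightarrow> continuous_on {0..1} (ev e E)"
proof (induction e)
  case (Cst c) show ?case unfolding ev_fun by (rule continuous_on_const)
next
  case (Plus a b) then show ?case unfolding ev_fun by (intro continuous_on_add) auto
next
  case (Times a b) then show ?case unfolding ev_fun by (intro continuous_on_mult) auto
next
  case (Integ a)
  then have "continuous_on {0..1} (ev a E)" by simp
  then show ?case unfolding ev_fun
    by (intro indefinite_integral_continuous_1 integrable_continuous_interval)
next
  case (Lin j L)
  then show ?case unfolding ev_fun
    by (intro finlin_cont[of L "{0..1}" "E j"]) (auto simp: goodE_def)
qed

lemma ev_bound:
  assumes "wft e m" "goodE E"
  shows "\<exists>B>0. \<forall>t\<in>{0..1}. norm (ev e E t) \<le> B"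
proof -
  have "compact (ev e E ` {0..1})"
    by (rule compact_continuous_image[OF ev_cont[OF assms]]) simp
  then have "bounded (ev e E ` {0..1})" by (rule compact_imp_bounded)
  then show ?thesis by (auto simp: bounded_pos)
qed

definition close :: "nat \<Rightarrow> ('n option list \<times> 'n) set \<Rightarrow> real \<Rightarrow> ('n,'a::real_normed_field) env \<Rightarrow> ('n,'a) env \<Rightarrow> bool" where
  "close m C \<delta> E' E \<longleftrightarrow> (\<forall>j<m. \<forall>c\<in>C. \<forall>t\<in>{0..1}. norm (E' j t (fst c) (snd c) - E j t (fst c) (snd c)) < \<delta>)"

lemma close_mono: "close m C \<delta> E' E \<Longrightarrow> C' \<subseteq> C \<Longrightarrow> \<delta> \<le> \<delta>' \<Longrightarrow> close m C' \<delta>' E' E"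
  unfolding close_def by force

lemma ev_close:
  fixes e :: "('n,'a::{real_normed_field,banach}) tm"
  assumes "wft e m" "goodE E" "\<epsilon> > 0"
  shows "\<exists>\<delta>>0. \<exists>C. finite C \<and> (\<forall>E'. goodE E' \<and> close m C \<delta> E' E \<longrightarrow> (\<forall>t\<in>{0..1}. norm (ev e E' t - ev e E t) < \<epsilon>))"
  using assms
proof (induction e arbitrary: \<epsilon>)
  case (Cst a)
  then show ?case by (intro exI[of _ 1] exI[of _ "{}"]) auto
next
  case (Plus a b)
  from Plus.IH(1)[of "\<epsilon>/2"] Plus.prems obtain \<delta>a Ca where a: "\<delta>a > 0" "finite Ca"
    "\<And>E'. goodE E' \<Longrightarrow> close m Ca \<delta>a E' E \<Longrightarrow> \<forall>t\<in>{0..1}. norm (ev a E' t - ev a E t) < \<epsilon>/2" by auto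
  from Plus.IH(2)[of "\<epsilon>/2"] Plus.prems obtain \<delta>b Cb where b: "\<delta>b > 0" "finite Cb"
    "\<And>E'. goodE E' \<Longrightarrow> close m Cb \<delta>b E' E \<Longrightarrow> \<forall>t\<in>{0..1}. norm (ev b E' t - ev b E t) < \<epsilon>/2" by auto
  show ?case
  proof (intro exI[of _ "min \<delta>a \<delta>b"] exI[of _ "Ca \<union> Cb"] conjI allI impI ballI)
    fix E' t assume E': "goodE E' \<and> close m (Ca \<union> Cb) (min \<delta>a \<delta>b) E' E" and t: "t \<in> {0..1::real}"
    have "norm (ev a E' t - ev a E t) < \<epsilon>/2" using a(3)[of E'] E' t close_mono[of m "Ca \<union> Cb" "min \<delta>a \<delta>b" E' E Ca \<delta>a] by auto
    moreover have "norm (ev b E' t - ev b E t) < \<epsilon>/2" using b(3)[of E'] E' t close_mono[of m "Ca \<union> Cb" "min \<delta>a \<delta>b" E' E Cb \<delta>b] by auto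
    ultimately show "norm (ev (Plus a b) E' t - ev (Plus a b) E t) < \<epsilon>"
      using norm_triangle_ineq[of "ev a E' t - ev a E t" "ev b E' t - ev b E t"] by (simp add: algebra_simps)
  qed (use a b in auto)
next
  case (Times a b)
  from ev_bound[of a m E] Times.prems obtain Ba where Ba: "Ba > 0" "\<forall>t\<in>{0..1}. norm (ev a E t) \<le> Ba" by auto
  from ev_bound[of b m E] Times.prems obtain Bb where Bb: "Bb > 0" "\<forall>t\<in>{0..1}. norm (ev b E t) \<le> Bb" by auto
  define \<epsilon>a where "\<epsilon>a = \<epsilon> / (2 * (Bb + 1))"
  define \<epsilon>b where "\<epsilon>b = min 1 (\<epsilon> / (2 * (Ba + 1)))"
  have \<epsilon>ab: "\<epsilon>a > 0" "\<epsilon>b > 0" using Times.prems Ba Bb by (auto simp: \<epsilon>a_def \<epsilon>b_def)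
  from Times.IH(1)[of "\<epsilon>a"] Times.prems \<epsilon>ab obtain \<delta>a Ca where a: "\<delta>a > 0" "finite Ca"
    "\<And>E'. goodE E' \<Longrightarrow> close m Ca \<delta>a E' E \<Longrightarrow> \<forall>t\<in>{0..1}. norm (ev a E' t - ev a E t) < \<epsilon>a" by auto
  from Times.IH(2)[of "\<epsilon>b"] Times.prems \<epsilon>ab obtain \<delta>b Cb where b: "\<delta>b > 0" "finite Cb"
    "\<And>E'. goodE E' \<Longrightarrow> close m Cb \<delta>b E' E \<Longrightarrow> \<forall>t\<in>{0..1}. norm (ev b E' t - ev b E t) < \<epsilon>b" by auto
  show ?case
  proof (intro exI[of _ "min \<delta>a \<delta>b"] exI[of _ "Ca \<union> Cb"] conjI allI impI ballI)
    fix E' t assume E': "goodE E' \<and> close m (Ca \<union> Cb) (min \<delta>a \<delta>b) E' E" and t: "t \<in> {0..1::real}"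
    define a' where "a' = ev a E' t"
    define a0 where "a0 = ev a E t"
    define b' where "b' = ev b E' t"
    define b0 where "b0 = ev b E t"
    have na: "norm (a' - a0) < \<epsilon>a" using a(3)[of E'] E' t close_mono[of m "Ca \<union> Cb" "min \<delta>a \<delta>b" E' E Ca \<delta>a] by (auto simp: a'_def a0_def)
    have nb: "norm (b' - b0) < \<epsilon>b" using b(3)[of E'] E' t close_mono[of m "Ca \<union> Cb" "min \<delta>a \<delta>b" E' E Cb \<delta>b] by (auto simp: b'_def b0_def)
    have a0B: "norm a0 \<le> Ba" using Ba t by (auto simp: a0_def)
    have b0B: "norm b0 \<le> Bb" using Bb t by (auto simp: b0_def)
    have b'B: "norm b' \<le> Bb + 1"
    proof -
      have "norm b' \<le> norm b0 + norm (b' - b0)" using norm_triangle_ineq[of b0 "b' - b0"] by simp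
      also have "\<dots> \<le> Bb + 1" using b0B nb \<epsilon>b_def by linarith
      finally show ?thesis .
    qed
    have t1: "norm (a' - a0) * norm b' < \<epsilon> / 2"
    proof -
      have "norm (a' - a0) * norm b' \<le> norm (a' - a0) * (Bb + 1)" using b'B by (simp add: mult_left_mono)
      also have "\<dots> < \<epsilon>a * (Bb + 1)" using na Bb by (intro mult_strict_right_mono) auto
      also have "\<dots> = \<epsilon> / 2" using Bb by (simp add: \<epsilon>a_def field_simps)
      finally show ?thesis .
    qed
    have t2: "norm a0 * norm (b' - b0) < \<epsilon> / 2"
    proof -
      have "norm a0 * norm (b' - b0) \<le> Ba * \<epsilon>b" using a0B nb Ba by (intro mult_mono) auto
      also have "\<dots> \<le> Ba * (\<epsilon> / (2 * (Ba + 1)))" using Ba by (intro mult_left_mono) (auto simp: \<epsilon>b_def)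
      also have "\<dots> < \<epsilon> / 2" using Ba Times.prems by (simp add: field_simps)
      finally show ?thesis .
    qed
    have "a' * b' - a0 * b0 = (a' - a0) * b' + a0 * (b' - b0)" by (simp add: algebra_simps)
    then have "norm (a' * b' - a0 * b0) \<le> norm (a' - a0) * norm b' + norm a0 * norm (b' - b0)"
      by (metis norm_mult norm_triangle_ineq)
    with t1 t2 show "norm (ev (Times a b) E' t - ev (Times a b) E t) < \<epsilon>"
      by (simp add: a'_def a0_def b'_def b0_def)
  qed (use a b in auto)
next
  case (Integ a)
  from Integ.IH[of "\<epsilon>/2"] Integ.prems obtain \<delta> C where a: "\<delta> > 0" "finite C"
    "\<And>E'. goodE E' \<Longrightarrow> close m C \<delta> E' E \<Longrightarrow> \<forall>t\<in>{0..1}. norm (ev a E' t - ev a E t) < \<epsilon>/2" by auto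
  show ?case
  proof (intro exI[of _ \<delta>] exI[of _ C] conjI allI impI ballI)
    fix E' t assume E': "goodE E' \<and> close m C \<delta> E' E" and t: "t \<in> {0..1::real}"
    have c1: "continuous_on {0..t} (ev a E')" using ev_cont[of a m E'] Integ.prems E' t
      by (auto intro: continuous_on_subset)
    have c2: "continuous_on {0..t} (ev a E)" using ev_cont[of a m E] Integ.prems t
      by (auto intro: continuous_on_subset)
    have "integral {0..t} (ev a E') - integral {0..t} (ev a E) = integral {0..t} (\<lambda>s. ev a E' s - ev a E s)"
      using c1 c2 by (intro integral_diff[symmetric] integrable_continuous_interval)
    also have "norm \<dots> \<le> \<epsilon>/2 * (t - 0)"
      using t a(3)[of E'] E' by (intro integral_bound continuous_intros c1 c2) (auto intro: less_imp_le)
    also have "\<dots> < \<epsilon>" using t Integ.prems by auto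
    finally show "norm (ev (Integ a) E' t - ev (Integ a) E t) < \<epsilon>" by simp
  qed (use a in auto)
next
  case (Lin j L)
  then obtain S c where S: "finite S" and e: "\<And>x. L x = (\<Sum>p\<in>S. c p * x (fst p) (snd p))" and jm: "j < m"
    unfolding wft.simps finlin_def by blast
  define A where "A = (\<Sum>p\<in>S. norm (c p))"
  have A0: "A \<ge> 0" unfolding A_def by (simp add: sum_nonneg)
  show ?case
  proof (intro exI[of _ "\<epsilon> / (A + 1)"] exI[of _ S] conjI allI impI ballI)
    fix E' t assume E': "goodE E' \<and> close m S (\<epsilon> / (A + 1)) E' E" and t: "t \<in> {0..1::real}"
    have "L (E' j t) - L (E j t) = (\<Sum>p\<in>S. c p * (E' j t (fst p) (snd p) - E j t (fst p) (snd p)))"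
      unfolding e by (simp add: sum_subtractf algebra_simps)
    also have "norm \<dots> \<le> (\<Sum>p\<in>S. norm (c p) * (\<epsilon> / (A + 1)))"
    proof (intro order.trans[OF norm_sum] sum_mono)
      fix p assume p: "p \<in> S"
      have "norm (E' j t (fst p) (snd p) - E j t (fst p) (snd p)) \<le> \<epsilon> / (A + 1)"
        using E' t jm p unfolding close_def by (auto intro: less_imp_le)
      then show "norm (c p * (E' j t (fst p) (snd p) - E j t (fst p) (snd p))) \<le> norm (c p) * (\<epsilon> / (A + 1))"
        unfolding norm_mult by (intro mult_left_mono) auto
    qed
    also have "\<dots> = A * (\<epsilon> / (A + 1))" unfolding A_def by (rule sum_distrib_right[symmetric])
    also have "\<dots> < \<epsilon>" using A0 Lin.prems by (simp add: field_simps)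
    finally show "norm (ev (Lin j L) E' t - ev (Lin j L) E t) < \<epsilon>" by simp
  qed (use S Lin.prems A0 in auto)
qed




section \<open>Derivatives of terms\<close>

primrec ren :: "('n,'a) tm \<Rightarrow> nat \<Rightarrow> ('n,'a) tm" where
  "ren (Cst a) p = Cst a"
| "ren (Plus a b) p = Plus (ren a p) (ren b p)"
| "ren (Times a b) p = Times (ren a p) (ren b p)"
| "ren (Integ a) p = Integ (ren a p)"
| "ren (Lin j L) p = Lin (if j = 0 then p else j) L"

primrec dq :: "('n,'a::zero) tm \<Rightarrow> nat \<Rightarrow> nat \<Rightarrow> ('n,'a) tm" where
  "dq (Cst a) m p = Cst 0"
| "dq (Plus a b) m p = Plus (dq a m p) (dq b m p)"
| "dq (Times a b) m p = Plus (Times (dq a m p) (ren b p)) (Times a (dq b m p))"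
| "dq (Integ a) m p = Integ (dq a m p)"
| "dq (Lin j L) m p = (if j = 0 then Lin m L else Cst 0)"

primrec dif :: "('n,'a::zero) tm \<Rightarrow> nat \<Rightarrow> ('n,'a) tm" where
  "dif (Cst a) m = Cst 0"
| "dif (Plus a b) m = Plus (dif a m) (dif b m)"
| "dif (Times a b) m = Plus (Times (dif a m) b) (Times a (dif b m))"
| "dif (Integ a) m = Integ (dif a m)"
| "dif (Lin j L) m = (if j = 0 then Lin m L else Cst 0)"

lemma ev_ren: "ev (ren e p) E = ev e (E(0 := E p))"
  by (induction e) auto

lemma wf_ren: "wft e m \<Longrightarrow> m < p \<Longrightarrow> wft (ren e p) (Suc p)"
  by (induction e) auto

lemma wf_dq: "wft e m \<Longrightarrow> m < p \<Longrightarrow> wft (dq e m p) (Suc p)"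
  by (induction e) (auto intro: wf_ren wf_mono)

lemma wf_diff: "wft e m \<Longrightarrow> wft (dif e m) (Suc m)"
  by (induction e) (auto intro: wf_mono)

lemma dq_diff: "wft e m \<Longrightarrow> m < p \<Longrightarrow> ev (dq e m p) (E(p := E 0)) = ev (dif e m) E"
proof (induction e)
  case (Times a b)
  have r1: "ev (ren b p) (E(p := E 0)) = ev b E"
    unfolding ev_ren using Times.prems by (intro ev_cong[of b m]) auto
  have r2: "ev a (E(p := E 0)) = ev a E"
    using Times.prems by (intro ev_cong[of a m]) auto
  have IHa: "ev (dq a m p) (E(p := E 0)) = ev (dif a m) E" by (rule Times.IH(1)) (use Times.prems in auto)
  have IHb: "ev (dq b m p) (E(p := E 0)) = ev (dif b m) E" by (rule Times.IH(2)) (use Times.prems in auto)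
  show ?case by (simp only: dq.simps dif.simps ev_fun IHa IHb r1 r2)
next
  case (Plus a b)
  have IHa: "ev (dq a m p) (E(p := E 0)) = ev (dif a m) E" by (rule Plus.IH(1)) (use Plus.prems in auto)
  have IHb: "ev (dq b m p) (E(p := E 0)) = ev (dif b m) E" by (rule Plus.IH(2)) (use Plus.prems in auto)
  show ?case by (simp only: dq.simps dif.simps ev_fun IHa IHb)
next
  case (Integ a)
  have IHa: "ev (dq a m p) (E(p := E 0)) = ev (dif a m) E" by (rule Integ.IH) (use Integ.prems in auto)
  show ?case by (simp only: dq.simps dif.simps ev_fun IHa)
qed auto

lemma goodE_upd: "goodE E \<Longrightarrow> (\<And>\<nu> i. continuous_on {0..1} (\<lambda>t. f t \<nu> i)) \<Longrightarrow> goodE (E(p := f))"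
  unfolding goodE_def by auto

lemma goodE_lin: "goodE E \<Longrightarrow> continuous_on {0..1} (\<lambda>t. E k t \<nu> i + s * E m t \<nu> i)"
  unfolding goodE_def by (intro continuous_intros) auto

lemma dq_ident:
  fixes E :: "('n::finite,'a::{real_normed_field,banach}) env"
  assumes "wft e m" "m < p" "goodE E" "t \<in> {0..1}"
  shows "ev e (E(0 := (\<lambda>t \<nu> j. E 0 t \<nu> j + s * E m t \<nu> j))) t - ev e E t =
         s * ev (dq e m p) (E(p := (\<lambda>t \<nu> j. E 0 t \<nu> j + s * E m t \<nu> j))) t"
  using assms
proof (induction e arbitrary: t)
  case (Plus a b)
  then show ?case by (simp add: algebra_simps)
next
  case (Times a b)
  define us where "us = (\<lambda>t \<nu> j. E 0 t \<nu> j + s * E m t \<nu> j)"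
  have r: "ev (ren b p) (E(p := us)) = ev b (E(0 := us))"
    unfolding ev_ren using Times.prems by (intro ev_cong[of b m]) auto
  have r2: "ev a (E(p := us)) = ev a E"
    using Times.prems by (intro ev_cong[of a m]) auto
  have ia: "ev a (E(0 := us)) t - ev a E t = s * ev (dq a m p) (E(p := us)) t"
    unfolding us_def by (rule Times.IH(1)) (use Times.prems in auto)
  have ib: "ev b (E(0 := us)) t - ev b E t = s * ev (dq b m p) (E(p := us)) t"
    unfolding us_def by (rule Times.IH(2)) (use Times.prems in auto)
  have "ev a (E(0 := us)) t * ev b (E(0 := us)) t - ev a E t * ev b E t =
     (ev a (E(0 := us)) t - ev a E t) * ev b (E(0 := us)) t + ev a E t * (ev b (E(0 := us)) t - ev b E t)"
    by (simp add: algebra_simps)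
  also have "\<dots> = s * (ev (dq a m p) (E(p := us)) t * ev (ren b p) (E(p := us)) t + ev a (E(p := us)) t * ev (dq b m p) (E(p := us)) t)"
    unfolding ia ib r r2 by (simp add: algebra_simps)
  finally have X: "ev a (E(0 := us)) t * ev b (E(0 := us)) t - ev a E t * ev b E t =
    s * (ev (dq a m p) (E(p := us)) t * ev (ren b p) (E(p := us)) t + ev a (E(p := us)) t * ev (dq b m p) (E(p := us)) t)" .
  show ?case using X unfolding us_def by (simp only: ev.simps dq.simps)
next
  case (Integ a)
  define us where "us = (\<lambda>t \<nu> j. E 0 t \<nu> j + s * E m t \<nu> j)"
  have g1: "goodE (E(0 := us))" using Integ.prems unfolding us_def by (intro goodE_upd goodE_lin)
  have g2: "goodE (E(p := us))" using Integ.prems unfolding us_def by (intro goodE_upd goodE_lin)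
  have c1: "continuous_on {0..t} (ev a (E(0 := us)))" using ev_cont[OF _ g1, of a m] Integ.prems
    by (auto intro: continuous_on_subset)
  have c2: "continuous_on {0..t} (ev a E)" using ev_cont[of a m E] Integ.prems
    by (auto intro: continuous_on_subset)
  have "integral {0..t} (ev a (E(0 := us))) - integral {0..t} (ev a E) = integral {0..t} (\<lambda>\<tau>. ev a (E(0 := us)) \<tau> - ev a E \<tau>)"
    using c1 c2 by (intro integral_diff[symmetric] integrable_continuous_interval)
  also have "\<dots> = integral {0..t} (\<lambda>\<tau>. s * ev (dq a m p) (E(p := us)) \<tau>)"
  proof (rule integral_cong)
    fix \<tau> assume "\<tau> \<in> {0..t}"
    then show "ev a (E(0 := us)) \<tau> - ev a E \<tau> = s * ev (dq a m p) (E(p := us)) \<tau>"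
      unfolding us_def by (intro Integ.IH) (use Integ.prems in auto)
  qed
  also have "\<dots> = s * integral {0..t} (ev (dq a m p) (E(p := us)))"
    by simp
  finally show ?case unfolding us_def by (simp only: ev.simps dq.simps)
next
  case (Lin j L)
  then show ?case by (auto simp: finlin_lin)
qed simp

lemma bound_coords:
  fixes E :: "('n::finite,'a::real_normed_field) env"
  assumes "goodE E" "finite C"
  shows "\<exists>B>0. \<forall>c\<in>C. \<forall>t\<in>{0..1}. norm (E m t (fst c) (snd c)) \<le> B"
proof -
  have "\<exists>B>0. \<forall>t\<in>{0..1}. norm (E m t (fst c) (snd c)) \<le> B" for c
  proof -
    have "compact ((\<lambda>t. E m t (fst c) (snd c)) ` {0..1})"
      using assms(1) unfolding goodE_def by (intro compact_continuous_image) auto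
    then show ?thesis by (auto simp: bounded_pos dest: compact_imp_bounded)
  qed
  then obtain Bf where Bf: "\<And>c. Bf c > 0" "\<And>c t. t \<in> {0..1} \<Longrightarrow> norm (E m t (fst c) (snd c)) \<le> Bf c"
    by metis
  define B where "B = 1 + (\<Sum>c\<in>C. Bf c)"
  have "Bf c \<le> B" if "c \<in> C" for c
  proof -
    have "Bf c \<le> (\<Sum>c\<in>C. Bf c)" using that assms(2) Bf(1) by (intro member_le_sum) (auto intro: less_imp_le)
    then show ?thesis by (simp add: B_def)
  qed
  moreover have "B > 0" unfolding B_def using Bf(1) by (simp add: add_pos_nonneg sum_nonneg less_imp_le)
  ultimately show ?thesis using Bf(2) by (meson order.trans)
qed

lemma ev_deriv:
  fixes E :: "('n::finite,'a::{real_normed_field,banach}) env"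
  assumes "wft e m" "goodE E"
  shows "((\<lambda>s. (ev e (E(0 := (\<lambda>t \<nu> j. E 0 t \<nu> j + s * E m t \<nu> j))) 1 - ev e E 1) / s) \<longlongrightarrow> ev (dif e m) E 1) (at 0)"
proof -
  define p where "p = Suc m"
  define us where "us s = (\<lambda>t \<nu> j. E 0 t \<nu> j + s * E m t \<nu> j)" for s
  define G where "G s = ev (dq e m p) (E(p := us s)) 1" for s
  have us0: "us 0 = E 0" by (simp add: us_def)
  have Gd: "G 0 = ev (dif e m) E 1" unfolding G_def us0 using dq_diff[OF assms(1), of p E] by (simp add: p_def)
  have eq: "(ev e (E(0 := us s)) 1 - ev e E 1) / s = G s" if "s \<noteq> 0" for s
    using dq_ident[OF assms(1) _ assms(2), of p 1 s] that by (simp add: p_def G_def us_def)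
  have wq: "wft (dq e m p) (Suc p)" using wf_dq[OF assms(1)] by (simp add: p_def)
  have g0: "goodE (E(p := E 0))" using assms(2) by (intro goodE_upd) (auto simp: goodE_def)
  have "(G \<longlongrightarrow> G 0) (at 0)"
  proof (rule tendstoI)
    fix \<epsilon> :: real assume \<epsilon>: "\<epsilon> > 0"
    from ev_close[OF wq g0 \<epsilon>] obtain \<delta> C where dC: "\<delta> > 0" "finite C"
      "\<And>E'. goodE E' \<Longrightarrow> close (Suc p) C \<delta> E' (E(p := E 0)) \<Longrightarrow> \<forall>t\<in>{0..1}. norm (ev (dq e m p) E' t - ev (dq e m p) (E(p := E 0)) t) < \<epsilon>"
      by blast
    from bound_coords[OF assms(2) dC(2)] obtain B where B: "B > 0"
      "\<And>c t. c \<in> C \<Longrightarrow> t \<in> {0..1} \<Longrightarrow> norm (E m t (fst c) (snd c)) \<le> B" by blast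
    show "\<forall>\<^sub>F s in at 0. dist (G s) (G 0) < \<epsilon>"
      unfolding eventually_at
    proof (intro exI[of _ "\<delta> / B"] conjI ballI impI)
      show "\<delta> / B > 0" using dC B by simp
      fix s :: 'a assume "s \<in> UNIV" and s: "s \<noteq> 0 \<and> dist s 0 < \<delta> / B"
      have gs: "goodE (E(p := us s))" using assms(2) unfolding us_def by (intro goodE_upd goodE_lin)
      have "close (Suc p) C \<delta> (E(p := us s)) (E(p := E 0))"
        unfolding close_def
      proof (intro allI impI ballI)
        fix j c t assume j: "j < Suc p" and c: "c \<in> C" and t: "t \<in> {0..1::real}"
        show "norm ((E(p := us s)) j t (fst c) (snd c) - (E(p := E 0)) j t (fst c) (snd c)) < \<delta>"
        proof (cases "j = p")
          case True
          have "norm (s * E m t (fst c) (snd c)) = norm s * norm (E m t (fst c) (snd c))" by (simp add: norm_mult)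
          also have "\<dots> \<le> norm s * B" using B(2)[OF c t] by (intro mult_left_mono) auto
          also have "\<dots> < \<delta>" using s B by (simp add: field_simps)
          finally show ?thesis using True by (simp add: us_def)
        qed (use dC in simp)
      qed
      then show "dist (G s) (G 0) < \<epsilon>"
        using dC(3)[OF gs] by (simp add: G_def us0 dist_norm)
    qed
  qed
  then have "(G \<longlongrightarrow> ev (dif e m) E 1) (at 0)" using Gd by simp
  moreover have "\<forall>\<^sub>F s in at 0. G s = (ev e (E(0 := (\<lambda>t \<nu> j. E 0 t \<nu> j + s * E m t \<nu> j))) 1 - ev e E 1) / s"
    using eq unfolding us_def by (auto simp: eventually_at_filter)
  ultimately show ?thesis by (rule Lim_transform_eventually)
qed




section \<open>The solution term\<close>

definition list_of :: "'b set \<Rightarrow> 'b list" where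
  "list_of S = (SOME xs. set xs = S \<and> distinct xs)"

lemma list_of: "finite S \<Longrightarrow> set (list_of S) = S \<and> distinct (list_of S)"
  unfolding list_of_def by (rule someI_ex) (rule finite_distinct_list)

definition Pl :: "'n option list \<Rightarrow> 'n option list list" where
  "Pl \<nu> = filter (\<lambda>\<eta>. wt \<eta> < wt \<nu>) (list_of (Pw \<nu>))"

lemma Pl: "set (Pl (\<nu>::'n::finite option list)) = Pw \<nu> \<and> distinct (Pl \<nu>)"
  using list_of[OF finite_Pw[of \<nu>]] by (auto simp: Pl_def Pw_def)

function solT :: "'n::finite option list \<Rightarrow> 'n \<Rightarrow> ('n,'a::comm_ring_1) tm" where
  "solT \<nu> k = Integ (Plus (Lin 0 (\<lambda>x. x \<nu> k))
     (foldr (\<lambda>\<eta> acc. Plus (Times (solT \<eta> k) (Lin 0 (\<lambda>x. dphi x \<eta> \<nu>))) acc) (Pl \<nu>) (Cst 0)))"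
  by pat_completeness auto
termination by (relation "Wellfounded.measure (\<lambda>(\<nu>,k). wt \<nu>)") (auto simp: Pl_def)

declare solT.simps[simp del]

definition intT :: "'n::finite option list \<Rightarrow> 'n \<Rightarrow> ('n,'a::comm_ring_1) tm" where
  "intT \<nu> k = Plus (Lin 0 (\<lambda>x. x \<nu> k))
     (foldr (\<lambda>\<eta> acc. Plus (Times (solT \<eta> k) (Lin 0 (\<lambda>x. dphi x \<eta> \<nu>))) acc) (Pl \<nu>) (Cst 0))"

lemma solT_eq: "solT \<nu> k = Integ (intT \<nu> k)"
  by (subst solT.simps) (simp add: intT_def)

lemma ev_foldr: "distinct xs \<Longrightarrow> ev (foldr (\<lambda>\<eta> acc. Plus (f \<eta>) acc) xs (Cst 0)) E t = (\<Sum>\<eta>\<in>set xs. ev (f \<eta>) E t)"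
  by (induction xs) auto

lemma wf_foldr: "(\<And>\<eta>. \<eta> \<in> set xs \<Longrightarrow> wft (f \<eta>) m) \<Longrightarrow> wft (foldr (\<lambda>\<eta> acc. Plus (f \<eta>) acc) xs (Cst 0)) m"
  by (induction xs) auto

lemma wf_solT: "wft (solT \<nu> k :: ('n::finite,'a::comm_ring_1) tm) 1"
proof (induction "wt \<nu>" arbitrary: \<nu> rule: less_induct)
  case less
  have "wft (solT \<eta> k :: ('n,'a) tm) 1" if "\<eta> \<in> set (Pl \<nu>)" for \<eta>
    using that by (intro less) (auto simp: Pl_def)
  then show ?case
    by (subst solT.simps) (auto intro!: wf_foldr finlin_dphi)
qed

lemma wf_intT: "wft (intT \<nu> k) 1"
  using wf_solT[of \<nu> k] unfolding solT_eq by simp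

lemma ev_intT: "ev (intT \<nu> k) E t = E 0 t \<nu> k + (\<Sum>\<eta>\<in>Pw \<nu>. ev (solT \<eta> k) E t * dphi (E 0 t) \<eta> \<nu>)"
  unfolding intT_def using Pl[of \<nu>] by (simp add: ev_foldr)

lemma ev_solT: "ev (solT \<nu> k) E t = integral {0..t} (ev (intT \<nu> k) E)"
  unfolding solT_eq by simp

lemma tendsto_fun_iff: "(f \<longlongrightarrow> l) F \<longleftrightarrow> (\<forall>i. ((\<lambda>x. f x i) \<longlongrightarrow> l i) F)"
proof -
  have "(f \<longlongrightarrow> l) F \<longleftrightarrow> limitin (product_topology (\<lambda>i. euclidean) UNIV) f l F"
    by (simp add: euclidean_product_topology)
  also have "\<dots> \<longleftrightarrow> (\<forall>i. ((\<lambda>x. f x i) \<longlongrightarrow> l i) F)"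
    by (simp add: limitin_componentwise)
  finally show ?thesis .
qed

lemma vd_quot_iff:
  fixes f :: "real \<Rightarrow> 'a::real_normed_field"
  shows "(f has_vector_derivative D) (at x within S) \<longleftrightarrow> ((\<lambda>y. (f y - f x) / of_real (y - x)) \<longlongrightarrow> D) (at x within S)"
proof -
  have bl: "bounded_linear (\<lambda>h. h *\<^sub>R D)" by (rule bounded_linear_scaleR_left)
  have e: "norm ((f y - f x) / of_real (y - x) - D) = norm (f y - f x - (y - x) *\<^sub>R D) / norm (y - x)"
    if "y \<noteq> x" for y
  proof -
    have "(f y - f x) / of_real (y - x) - D = (f y - f x - (y - x) *\<^sub>R D) / of_real (y - x)"
      using that by (simp add: field_simps scaleR_conv_of_real)
    then show ?thesis by (simp add: norm_divide del: of_real_diff)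
  qed
  have ev: "\<forall>\<^sub>F y in at x within S. norm (f y - f x - (y - x) *\<^sub>R D) / norm (y - x) = norm ((f y - f x) / of_real (y - x) - D)"
    using e by (auto simp: eventually_at_filter)
  have "(f has_vector_derivative D) (at x within S) \<longleftrightarrow> ((\<lambda>y. norm (f y - f x - (y - x) *\<^sub>R D) / norm (y - x)) \<longlongrightarrow> 0) (at x within S)"
    unfolding has_vector_derivative_def has_derivative_iff_norm using bl by simp
  also have "\<dots> \<longleftrightarrow> ((\<lambda>y. norm ((f y - f x) / of_real (y - x) - D)) \<longlongrightarrow> 0) (at x within S)"
    by (rule tendsto_cong[OF ev])
  also have "\<dots> \<longleftrightarrow> ((\<lambda>y. (f y - f x) / of_real (y - x)) \<longlongrightarrow> D) (at x within S)"
    by (simp add: tendsto_norm_zero_iff Lim_null[symmetric])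
  finally show ?thesis .
qed




section \<open>Existence and uniqueness of the evolution\<close>

definition envOf :: "(real \<Rightarrow> ('n,'a::real_normed_field) vser) \<Rightarrow> (nat \<Rightarrow> real \<Rightarrow> ('n,'a) vser) \<Rightarrow> nat \<Rightarrow> ('n,'a) env" where
  "envOf u vs k = (\<lambda>j. if j = 0 then u else if j \<le> k then vs (j - 1) else (\<lambda>t \<nu> i. 0))"

lemma C0_coord:
  assumes "u \<in> C0set" shows "continuous_on {0..1} (\<lambda>t. u t \<nu> i)"
proof -
  have "continuous_on {0..1} u" using assms unfolding C0set_def by blast
  then have "continuous_on {0..1} (\<lambda>t. u t \<nu>)" by (rule continuous_on_product_then_coordinatewise)
  then show ?thesis by (rule continuous_on_product_then_coordinatewise)
qed

lemma goodE_envOf: "u \<in> C0set \<Longrightarrow> (\<And>j. j < k \<Longrightarrow> vs j \<in> C0set) \<Longrightarrow> goodE (envOf u vs k)"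
  unfolding goodE_def envOf_def by (auto intro: C0_coord)

definition solg :: "(real \<Rightarrow> ('n::finite,'a::{real_normed_field,banach}) vser) \<Rightarrow> real \<Rightarrow> ('n,'a) vser" where
  "solg u = (\<lambda>t \<nu> k. ev (solT \<nu> k) (envOf u (\<lambda>_. undefined) 0) t)"

lemma envOf0: "envOf u vs k 0 = u" by (simp add: envOf_def)

lemma solves_exist:
  fixes u :: "real \<Rightarrow> ('n::finite,'a::{real_normed_field,banach}) vser"
  assumes u: "u \<in> C0set"
  shows "solves_evol u (solg u)"
proof -
  define E where "E = envOf u (\<lambda>_. undefined) 0"
  have gE: "goodE E" unfolding E_def using u by (intro goodE_envOf) auto
  have cI: "continuous_on {0..1} (ev (intT \<nu> k) E)" for \<nu> k
    by (rule ev_cont[OF wf_intT gE])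
  define \<gamma>' where "\<gamma>' = (\<lambda>t \<nu> k. ev (intT \<nu> k) E t)"
  have sg: "solg u t \<nu> k = integral {0..t} (ev (intT \<nu> k) E)" for t \<nu> k
    by (simp add: solg_def ev_solT E_def)
  have "solg u 0 = (\<lambda>\<nu> k. 0)" by (simp add: sg fun_eq_iff)
  moreover have "C1_on01 (solg u) \<gamma>'"
    unfolding C1_on01_def
  proof (intro conjI ballI)
    show "continuous_on {0..1} \<gamma>'" unfolding \<gamma>'_def
      by (intro continuous_on_coordinatewise_then_product cI)
    fix t :: real assume t: "t \<in> {0..1}"
    show "((\<lambda>s \<nu> k. (solg u s \<nu> k - solg u t \<nu> k) / of_real (s - t)) \<longlongrightarrow> \<gamma>' t) (at t within {0..1})"
      unfolding tendsto_fun_iff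
    proof (intro allI)
      fix \<nu> k
      have "((\<lambda>s. integral {0..s} (ev (intT \<nu> k) E)) has_vector_derivative ev (intT \<nu> k) E t) (at t within {0..1})"
        by (rule integral_has_vector_derivative[OF cI t])
      then show "((\<lambda>s. (solg u s \<nu> k - solg u t \<nu> k) / of_real (s - t)) \<longlongrightarrow> \<gamma>' t \<nu> k) (at t within {0..1})"
        unfolding vd_quot_iff by (simp add: sg \<gamma>'_def)
    qed
  qed
  moreover have "((\<lambda>s::real. (\<lambda>\<nu> k. (gmul (solg u t) (\<lambda>\<nu>' j. of_real s * u t \<nu>' j) \<nu> k - solg u t \<nu> k) / of_real s))
                       \<longlongrightarrow> \<gamma>' t) (at 0)" if t: "t \<in> {0..1}" for t
    unfolding tendsto_fun_iff
  proof (intro allI)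
    fix \<nu> k
    have "\<gamma>' t \<nu> k = u t \<nu> k + (\<Sum>\<eta>\<in>Pw \<nu>. solg u t \<eta> k * dphi (u t) \<eta> \<nu>)"
      by (simp add: \<gamma>'_def ev_intT E_def envOf0 solg_def)
    then show "((\<lambda>s. (gmul (solg u t) (\<lambda>\<nu>' j. of_real s * u t \<nu>' j) \<nu> k - solg u t \<nu> k) / of_real s) \<longlongrightarrow> \<gamma>' t \<nu> k) (at 0)"
      using tangent_lim[of "solg u t" "u t" \<nu> k] by simp
  qed
  ultimately show ?thesis unfolding solves_evol_def by blast
qed

lemma solves_unique:
  fixes u :: "real \<Rightarrow> ('n::finite,'a::{real_normed_field,banach}) vser"
  assumes u: "u \<in> C0set" and sol: "solves_evol u \<gamma>"
  shows "\<forall>t\<in>{0..1}. \<gamma> t \<nu> k = solg u t \<nu> k"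
proof -
  define E where "E = envOf u (\<lambda>_. undefined) 0"
  have gE: "goodE E" unfolding E_def using u by (intro goodE_envOf) auto
  have cI: "continuous_on {0..1} (ev (intT \<nu> k) E)" for \<nu> k
    by (rule ev_cont[OF wf_intT gE])
  have sg: "solg u t \<nu> k = integral {0..t} (ev (intT \<nu> k) E)" for t \<nu> k
    by (simp add: solg_def ev_solT E_def)
  from sol obtain \<gamma>' where g0: "\<gamma> 0 = (\<lambda>\<nu> k. 0)" and C1: "C1_on01 \<gamma> \<gamma>'" and
    tan: "\<And>t. t \<in> {0..1} \<Longrightarrow> ((\<lambda>s::real. (\<lambda>\<nu> k. (gmul (\<gamma> t) (\<lambda>\<nu>' j. of_real s * u t \<nu>' j) \<nu> k - \<gamma> t \<nu> k) / of_real s))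
                       \<longlongrightarrow> \<gamma>' t) (at 0)"
    unfolding solves_evol_def by blast
  show ?thesis
  proof (induction "wt \<nu>" arbitrary: \<nu> k rule: less_induct)
    case less
    have d: "\<gamma>' s \<nu> k = ev (intT \<nu> k) E s" if s: "s \<in> {0..1}" for s
    proof -
      have l1: "((\<lambda>r::real. (gmul (\<gamma> s) (\<lambda>\<nu>' j. of_real r * u s \<nu>' j) \<nu> k - \<gamma> s \<nu> k) / of_real r) \<longlongrightarrow> \<gamma>' s \<nu> k) (at 0)"
        using tan[OF s] unfolding tendsto_fun_iff by blast
      have l2: "((\<lambda>r::real. (gmul (\<gamma> s) (\<lambda>\<nu>' j. of_real r * u s \<nu>' j) \<nu> k - \<gamma> s \<nu> k) / of_real r)
           \<longlongrightarrow> u s \<nu> k + (\<Sum>\<eta>\<in>Pw \<nu>. \<gamma> s \<eta> k * dphi (u s) \<eta> \<nu>)) (at 0)"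
        by (rule tangent_lim)
      have "\<gamma>' s \<nu> k = u s \<nu> k + (\<Sum>\<eta>\<in>Pw \<nu>. \<gamma> s \<eta> k * dphi (u s) \<eta> \<nu>)"
        using tendsto_unique[OF _ l1 l2] by simp
      also have "\<dots> = u s \<nu> k + (\<Sum>\<eta>\<in>Pw \<nu>. solg u s \<eta> k * dphi (u s) \<eta> \<nu>)"
      proof -
        have "(\<Sum>\<eta>\<in>Pw \<nu>. \<gamma> s \<eta> k * dphi (u s) \<eta> \<nu>) = (\<Sum>\<eta>\<in>Pw \<nu>. solg u s \<eta> k * dphi (u s) \<eta> \<nu>)"
        proof (rule sum.cong[OF refl])
          fix \<eta> assume "\<eta> \<in> Pw \<nu>"
          then have "wt \<eta> < wt \<nu>" by (simp add: Pw_def)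
          with less s show "\<gamma> s \<eta> k * dphi (u s) \<eta> \<nu> = solg u s \<eta> k * dphi (u s) \<eta> \<nu>" by simp
        qed
        then show ?thesis by simp
      qed
      also have "\<dots> = ev (intT \<nu> k) E s"
        by (simp add: ev_intT E_def envOf0 solg_def)
      finally show ?thesis .
    qed
    have vd: "((\<lambda>r. \<gamma> r \<nu> k) has_vector_derivative \<gamma>' s \<nu> k) (at s within {0..1})" if s: "s \<in> {0..1}" for s
    proof -
      from C1 s have "((\<lambda>r. (\<lambda>\<nu> k. (\<gamma> r \<nu> k - \<gamma> s \<nu> k) / of_real (r - s))) \<longlongrightarrow> \<gamma>' s) (at s within {0..1})"
        unfolding C1_on01_def by blast
      then have "((\<lambda>r. (\<gamma> r \<nu> k - \<gamma> s \<nu> k) / of_real (r - s)) \<longlongrightarrow> \<gamma>' s \<nu> k) (at s within {0..1})"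
        unfolding tendsto_fun_iff by blast
      then show ?thesis unfolding vd_quot_iff .
    qed
    show ?case
    proof
      fix t :: real assume t: "t \<in> {0..1}"
      have "((\<lambda>s. \<gamma>' s \<nu> k) has_integral (\<gamma> t \<nu> k - \<gamma> 0 \<nu> k)) {0..t}"
        using t by (intro fundamental_theorem_of_calculus has_vector_derivative_within_subset[OF vd]) auto
      then have "((\<lambda>s. \<gamma>' s \<nu> k) has_integral (\<gamma> t \<nu> k)) {0..t}"
        using g0 by simp
      then have "(ev (intT \<nu> k) E has_integral (\<gamma> t \<nu> k)) {0..t}"
        by (rule has_integral_eq[rotated]) (use t d in auto)
      then show "\<gamma> t \<nu> k = solg u t \<nu> k" unfolding sg by (simp add: integral_unique)
    qed
  qed
qed




section \<open>Compact-open neighbourhoods\<close>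

definition COfam :: "(real \<Rightarrow> ('n,'a::real_normed_field) vser) set set" where
  "COfam = {{u. u ` K \<subseteq> U} | K U. compact K \<and> K \<subseteq> {0..1} \<and> open U}"

lemma CO_top_eq: "CO_top = subtopology (topology_generated_by COfam) C0set"
  unfolding CO_top_def COfam_def ..

lemma topspace_CO: "topspace (CO_top :: (real \<Rightarrow> ('n,'a::real_normed_field) vser) topology) = C0set"
proof -
  have "UNIV \<in> (COfam :: (real \<Rightarrow> ('n,'a) vser) set set)"
    unfolding COfam_def by (rule CollectI, rule exI[of _ "{}"], rule exI[of _ UNIV]) auto
  then have "\<Union>(COfam :: (real \<Rightarrow> ('n,'a) vser) set set) = UNIV" by blast
  then show ?thesis unfolding CO_top_eq by simp
qed

lemma open_coord_ball: "open {x :: ('n,'a::real_normed_field) vser. dist (x \<nu> i) a < r}"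
proof -
  have c1: "continuous_on UNIV (\<lambda>x :: ('n,'a) vser. x \<nu>)" by simp
  have c: "continuous_on UNIV (\<lambda>x :: ('n,'a) vser. x \<nu> i)"
    by (rule continuous_on_product_then_coordinatewise[OF c1])
  show ?thesis
    by (rule open_Collect_less) (intro continuous_intros c)+
qed

lemma CO_nbhd1:
  fixes w :: "real \<Rightarrow> ('n,'a::real_normed_field) vser"
  assumes w: "w \<in> C0set" and \<delta>: "\<delta> > 0"
  shows "\<exists>W. openin CO_top W \<and> w \<in> W \<and> (\<forall>w'\<in>W. w' \<in> C0set \<and> (\<forall>t\<in>{0..1}. norm (w' t \<nu> i - w t \<nu> i) < \<delta>))"
proof -
  define f where "f t = w t \<nu> i" for t
  have cf: "continuous_on {0..1} f" unfolding f_def by (rule C0_coord[OF w])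
  then have "uniformly_continuous_on {0..1} f" by (intro compact_uniformly_continuous) auto
  then obtain \<eta> where \<eta>: "\<eta> > 0" "\<And>x x'. x \<in> {0..1} \<Longrightarrow> x' \<in> {0..1} \<Longrightarrow> dist x' x < \<eta> \<Longrightarrow> dist (f x') (f x) < \<delta>/3"
    unfolding uniformly_continuous_on_def using \<delta> by (metis divide_pos_pos zero_less_numeral)
  have cov: "{0..1::real} \<subseteq> (\<Union>s\<in>{0..1}. ball s (\<eta>/2))" using \<eta> by force
  obtain F where F: "F \<subseteq> {0..1}" "finite F" "{0..1::real} \<subseteq> (\<Union>s\<in>F. ball s (\<eta>/2))"
    using compactE_image[where S="{0..1::real}" and C="{0..1}" and f="\<lambda>s. ball s (\<eta>/2)"] cov
    by (metis compact_Icc open_ball)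
  have Fne: "F \<noteq> {}" using F(3) by auto
  define K where "K s = cball s (\<eta>/2) \<inter> {0..1}" for s :: real
  define U where "U s = {x :: ('n,'a) vser. dist (x \<nu> i) (f s) < \<delta>/2}" for s
  define B where "B s = {u. u ` K s \<subseteq> U s}" for s
  define W where "W = (\<Inter>s\<in>F. B s) \<inter> C0set"
  have BCO: "B s \<in> COfam" for s
    unfolding COfam_def B_def K_def U_def
    by (rule CollectI, rule exI[of _ "cball s (\<eta>/2) \<inter> {0..1}"], rule exI[of _ "{x. dist (x \<nu> i) (f s) < \<delta>/2}"])
       (use open_coord_ball[of \<nu> i "f s" "\<delta>/2"] in auto)
  have "generate_topology_on COfam (\<Inter>s\<in>F. B s)"
    using F(2) Fne by (intro generate_topology_on_Inter) (auto intro: generate_topology_on.Basis BCO)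
  then have "openin CO_top W"
    unfolding CO_top_eq W_def openin_subtopology openin_topology_generated_by_iff by blast
  moreover have "w \<in> W"
  proof -
    have "w \<in> B s" if s: "s \<in> F" for s
      unfolding B_def
    proof (rule CollectI, rule subsetI)
      fix y assume "y \<in> w ` K s"
      then obtain t where t: "t \<in> K s" "y = w t" by blast
      then have "dist s t \<le> \<eta>/2" "t \<in> {0..1}" by (auto simp: K_def)
      then have "dist (f t) (f s) < \<delta>/3" using \<eta> s F(1) by (intro \<eta>(2)) (auto simp: dist_commute)
      then show "y \<in> U s" using \<delta> t by (simp add: f_def U_def)
    qed
    then show ?thesis unfolding W_def using w by blast
  qed
  moreover have "\<forall>w'\<in>W. w' \<in> C0set \<and> (\<forall>t\<in>{0..1}. norm (w' t \<nu> i - w t \<nu> i) < \<delta>)"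
  proof (intro ballI conjI)
    fix w' assume w': "w' \<in> W"
    then show "w' \<in> C0set" by (simp add: W_def)
    fix t :: real assume t: "t \<in> {0..1}"
    then obtain s where s: "s \<in> F" "t \<in> ball s (\<eta>/2)" using F(3) by blast
    then have tK: "t \<in> K s" using t by (auto simp: K_def)
    have "w' \<in> B s" using w' s by (simp add: W_def)
    then have d1: "dist (w' t \<nu> i) (f s) < \<delta>/2" using tK by (auto simp: B_def U_def)
    have d2: "dist (f t) (f s) < \<delta>/3" using \<eta> t s F(1) by (intro \<eta>(2)) (auto simp: dist_commute)
    have "dist (w' t \<nu> i) (f t) \<le> dist (w' t \<nu> i) (f s) + dist (f t) (f s)" by (rule dist_triangle2)
    also have "\<dots> < \<delta>" using d1 d2 \<delta> by linarith
    finally show "norm (w' t \<nu> i - w t \<nu> i) < \<delta>" by (simp add: dist_norm f_def)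
  qed
  ultimately show ?thesis by blast
qed

lemma CO_nbhd:
  fixes w :: "real \<Rightarrow> ('n,'a::real_normed_field) vser"
  assumes w: "w \<in> C0set" and \<delta>: "\<delta> > 0" and C: "finite C"
  shows "\<exists>W. openin CO_top W \<and> w \<in> W \<and> (\<forall>w'\<in>W. w' \<in> C0set \<and> (\<forall>c\<in>C. \<forall>t\<in>{0..1}. norm (w' t (fst c) (snd c) - w t (fst c) (snd c)) < \<delta>))"
  using C
proof (induction C rule: finite_induct)
  case empty
  show ?case using w by (intro exI[of _ C0set]) (auto simp: topspace_CO[symmetric])
next
  case (insert c C)
  then obtain W1 where W1: "openin CO_top W1" "w \<in> W1"
    "\<forall>w'\<in>W1. w' \<in> C0set \<and> (\<forall>c\<in>C. \<forall>t\<in>{0..1}. norm (w' t (fst c) (snd c) - w t (fst c) (snd c)) < \<delta>)" by blast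
  obtain W2 where W2: "openin CO_top W2" "w \<in> W2"
    "\<forall>w'\<in>W2. w' \<in> C0set \<and> (\<forall>t\<in>{0..1}. norm (w' t (fst c) (snd c) - w t (fst c) (snd c)) < \<delta>)"
    using CO_nbhd1[OF w \<delta>, of "fst c" "snd c"] by blast
  show ?case using W1 W2 by (intro exI[of _ "W1 \<inter> W2"]) auto
qed




section \<open>Smoothness of the evolution map\<close>

primrec dk :: "nat \<Rightarrow> ('n,'a::zero) tm \<Rightarrow> ('n,'a) tm" where
  "dk 0 e = e"
| "dk (Suc k) e = dif (dk k e) (Suc k)"

lemma wf_dk: "wft e 1 \<Longrightarrow> wft (dk k e) (Suc k)"
  by (induction k) (auto intro: wf_diff)

definition Dfun :: "nat \<Rightarrow> (real \<Rightarrow> ('n::finite,'a::{real_normed_field,banach}) vser) \<Rightarrow> (nat \<Rightarrow> real \<Rightarrow> ('n,'a) vser) \<Rightarrow> ('n,'a) vser" where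
  "Dfun k u vs = (\<lambda>\<nu> i. ev (dk k (solT \<nu> i)) (envOf u vs k) 1)"

lemma cm_fun: "(\<And>i. continuous_map X euclidean (\<lambda>x. f x i)) \<Longrightarrow> continuous_map X euclidean f"
  by (subst euclidean_product_topology[symmetric]) (simp add: continuous_map_componentwise_UNIV)

lemma cm_metric:
  fixes g :: "'x \<Rightarrow> 'b::metric_space"
  assumes "\<And>x \<epsilon>. x \<in> topspace X \<Longrightarrow> \<epsilon> > 0 \<Longrightarrow> \<exists>T. openin X T \<and> x \<in> T \<and> (\<forall>y\<in>T. dist (g y) (g x) < \<epsilon>)"
  shows "continuous_map X euclidean g"
  unfolding continuous_map_def
proof (intro conjI allI impI)
  show "g \<in> topspace X \<rightarrow> topspace euclidean" by simp
  fix U :: "'b set" assume "openin euclidean U"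
  then have U: "open U" by simp
  show "openin X {x \<in> topspace X. g x \<in> U}"
  proof (rule openin_subopen[THEN iffD2], intro ballI)
    fix x assume x: "x \<in> {x \<in> topspace X. g x \<in> U}"
    then have gx: "g x \<in> U" and xX: "x \<in> topspace X" by auto
    obtain \<epsilon> where \<epsilon>: "\<epsilon> > 0" "ball (g x) \<epsilon> \<subseteq> U" using openE[OF U gx] by blast
    from assms[OF xX \<epsilon>(1)] obtain T where T: "openin X T" "x \<in> T" "\<forall>y\<in>T. dist (g y) (g x) < \<epsilon>" by blast
    have "T \<subseteq> {x \<in> topspace X. g x \<in> U}"
    proof
      fix y assume y: "y \<in> T"
      then have "y \<in> topspace X" using openin_subset[OF T(1)] by blast
      moreover have "g y \<in> ball (g x) \<epsilon>" using T(3) y by (metis dist_commute mem_ball)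
      ultimately show "y \<in> {x \<in> topspace X. g x \<in> U}" using \<epsilon>(2) by blast
    qed
    with T show "\<exists>T. openin X T \<and> x \<in> T \<and> T \<subseteq> {x \<in> topspace X. g x \<in> U}" by blast
  qed
qed

lemma Dfun_cont_coord:
  fixes \<nu> :: "'n::finite option list"
  shows "continuous_map (prod_topology CO_top (product_topology (\<lambda>_. CO_top) {..<k})) euclidean
     (\<lambda>p. Dfun k (fst p) (snd p) \<nu> i :: 'a::{real_normed_field,banach})"
proof (rule cm_metric)
  fix p :: "(real \<Rightarrow> ('n::finite,'a) vser) \<times> (nat \<Rightarrow> real \<Rightarrow> ('n,'a) vser)" and \<epsilon> :: real
  assume p: "p \<in> topspace (prod_topology CO_top (product_topology (\<lambda>_. CO_top) {..<k}))" and \<epsilon>: "\<epsilon> > 0"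
  obtain u vs where puv: "p = (u, vs)" by fastforce
  from p have u: "u \<in> C0set" and vs: "vs \<in> PiE {..<k} (\<lambda>_. C0set)"
    by (auto simp: puv topspace_CO)
  define E where "E = envOf u vs k"
  have gE: "goodE E" unfolding E_def using u vs by (intro goodE_envOf) auto
  define e where "e = dk k (solT \<nu> i :: ('n,'a) tm)"
  have we: "wft e (Suc k)" unfolding e_def by (rule wf_dk[OF wf_solT])
  from ev_close[OF we gE \<epsilon>] obtain \<delta> C where dC: "\<delta> > 0" "finite C"
    "\<And>E'. goodE E' \<Longrightarrow> close (Suc k) C \<delta> E' E \<Longrightarrow> \<forall>t\<in>{0..1}. norm (ev e E' t - ev e E t) < \<epsilon>"
    by blast
  define P where "P w W \<longleftrightarrow> openin CO_top W \<and> w \<in> W \<and> (\<forall>w'\<in>W. w' \<in> C0set \<and> (\<forall>c\<in>C. \<forall>t\<in>{0..1}. norm (w' t (fst c) (snd c) - w t (fst c) (snd c)) < \<delta>))"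
    for w :: "real \<Rightarrow> ('n,'a) vser" and W
  define Wf where "Wf w = (SOME W. P w W)" for w
  have Wf: "P w (Wf w)" if "w \<in> C0set" for w
    unfolding Wf_def P_def by (rule someI_ex) (rule CO_nbhd[OF that dC(1,2)])
  define T where "T = Wf u \<times> PiE {..<k} (\<lambda>j. Wf (vs j))"
  have "openin (prod_topology CO_top (product_topology (\<lambda>_. CO_top) {..<k})) T"
    unfolding T_def openin_prod_Times_iff
  proof (intro disjI2 conjI)
    show "openin CO_top (Wf u)" using Wf[OF u] by (simp add: P_def)
    show "openin (product_topology (\<lambda>_. CO_top) {..<k}) (PiE {..<k} (\<lambda>j. Wf (vs j)))"
      using vs Wf by (subst openin_PiE) (auto simp: P_def)
  qed
  moreover have "p \<in> T"
    unfolding puv T_def using u vs Wf by (auto simp: P_def PiE_iff)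
  moreover have "\<forall>q\<in>T. dist (Dfun k (fst q) (snd q) \<nu> i) (Dfun k (fst p) (snd p) \<nu> i) < \<epsilon>"
  proof
    fix q assume q: "q \<in> T"
    obtain u' vs' where quv: "q = (u', vs')" by fastforce
    have u': "u' \<in> Wf u" and vs': "\<And>j. j < k \<Longrightarrow> vs' j \<in> Wf (vs j)" using q by (auto simp: quv T_def)
    have vsC: "\<And>j. j < k \<Longrightarrow> vs j \<in> C0set" using vs by auto
    have u'C: "u' \<in> C0set" using u' Wf[OF u] by (auto simp: P_def)
    have vs'C: "\<And>j. j < k \<Longrightarrow> vs' j \<in> C0set" using vs' Wf vsC by (auto simp: P_def)
    have gE': "goodE (envOf u' vs' k)" using u'C vs'C by (intro goodE_envOf)
    have "close (Suc k) C \<delta> (envOf u' vs' k) E"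
      unfolding close_def E_def
    proof (intro allI impI ballI)
      fix j c t assume j: "j < Suc k" and c: "c \<in> C" and t: "t \<in> {0..1::real}"
      show "norm (envOf u' vs' k j t (fst c) (snd c) - envOf u vs k j t (fst c) (snd c)) < \<delta>"
      proof (cases "j = 0")
        case True
        then show ?thesis using u' Wf[OF u] c t by (auto simp: envOf_def P_def)
      next
        case False
        then have jk: "j - 1 < k" using j by simp
        then show ?thesis using False j vs'[OF jk] Wf[OF vsC[OF jk]] c t by (auto simp: envOf_def P_def)
      qed
    qed
    then have "norm (ev e (envOf u' vs' k) 1 - ev e E 1) < \<epsilon>" using dC(3)[OF gE'] by auto
    then show "dist (Dfun k (fst q) (snd q) \<nu> i) (Dfun k (fst p) (snd p) \<nu> i) < \<epsilon>"
      by (simp add: quv puv Dfun_def e_def E_def dist_norm)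
  qed
  ultimately show "\<exists>T. openin (prod_topology CO_top (product_topology (\<lambda>_. CO_top) {..<k})) T \<and> p \<in> T \<and>
      (\<forall>y\<in>T. dist (Dfun k (fst y) (snd y) \<nu> i) (Dfun k (fst p) (snd p) \<nu> i) < \<epsilon>)" by blast
qed

lemma Dfun_cont:
  "continuous_map (prod_topology CO_top (product_topology (\<lambda>_. CO_top) {..<k})) euclidean
     (\<lambda>(u, vs). Dfun k u vs :: ('n::finite,'a::{real_normed_field,banach}) vser)"
proof -
  have "continuous_map (prod_topology CO_top (product_topology (\<lambda>_. CO_top) {..<k})) euclidean
     (\<lambda>p. Dfun k (fst p) (snd p) :: ('n,'a) vser)"
    by (intro cm_fun Dfun_cont_coord)
  moreover have "(\<lambda>(u, vs). Dfun k u vs :: ('n,'a) vser) = (\<lambda>p. Dfun k (fst p) (snd p))"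
    by (simp add: fun_eq_iff)
  ultimately show ?thesis by simp
qed

lemma Dfun_deriv:
  fixes u v :: "real \<Rightarrow> ('n::finite,'a::{real_normed_field,banach}) vser"
  assumes u: "u \<in> C0set" and vs: "vs \<in> PiE {..<k} (\<lambda>_. C0set)" and v: "v \<in> C0set"
  shows "((\<lambda>s::'a. (\<lambda>\<nu> i. (Dfun k (\<lambda>t \<nu>' j. u t \<nu>' j + s * v t \<nu>' j) vs \<nu> i - Dfun k u vs \<nu> i) / s))
            \<longlongrightarrow> Dfun (Suc k) u (vs(k := v))) (at 0)"
  unfolding tendsto_fun_iff
proof (intro allI)
  fix \<nu> i
  define e where "e = dk k (solT \<nu> i :: ('n,'a) tm)"
  have we: "wft e (Suc k)" unfolding e_def by (rule wf_dk[OF wf_solT])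
  define E where "E = envOf u (vs(k := v)) (Suc k)"
  have gE: "goodE E" unfolding E_def using u vs v by (intro goodE_envOf) (auto simp: less_Suc_eq)
  have E0: "E 0 = u" and Ek: "E (Suc k) = v" by (auto simp: E_def envOf_def)
  have c1: "ev e (envOf (\<lambda>t \<nu>' j. u t \<nu>' j + s * v t \<nu>' j) vs k) = ev e (E(0 := (\<lambda>t \<nu> j. E 0 t \<nu> j + s * E (Suc k) t \<nu> j)))" for s
    using we by (rule ev_cong) (auto simp: E_def envOf_def)
  have c2: "ev e (envOf u vs k) = ev e E"
    using we by (rule ev_cong) (auto simp: E_def envOf_def)
  have eq1: "(\<lambda>s. (Dfun k (\<lambda>t \<nu>' j. u t \<nu>' j + s * v t \<nu>' j) vs \<nu> i - Dfun k u vs \<nu> i) / s) =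
     (\<lambda>s. (ev e (E(0 := (\<lambda>t \<nu> j. E 0 t \<nu> j + s * E (Suc k) t \<nu> j))) 1 - ev e E 1) / s)"
    by (simp only: Dfun_def e_def[symmetric] c1 c2)
  have eq2: "Dfun (Suc k) u (vs(k := v)) \<nu> i = ev (dif e (Suc k)) E 1"
    by (simp only: Dfun_def dk.simps e_def[symmetric] E_def[symmetric])
  show "((\<lambda>s. (Dfun k (\<lambda>t \<nu>' j. u t \<nu>' j + s * v t \<nu>' j) vs \<nu> i - Dfun k u vs \<nu> i) / s) \<longlongrightarrow> Dfun (Suc k) u (vs(k := v)) \<nu> i) (at 0)"
    unfolding eq1 eq2 by (rule ev_deriv[OF we gE])
qed

lemma C0_regular_generic: "C0_regular_G TYPE('n::finite) TYPE('a::{real_normed_field,banach})"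
  unfolding C0_regular_G_def
proof (intro conjI)
  show "\<forall>u\<in>(C0set :: (real \<Rightarrow> ('n,'a) vser) set). \<exists>\<gamma>. solves_evol u \<gamma>"
    using solves_exist by blast
  show "\<exists>F :: (real \<Rightarrow> ('n,'a) vser) \<Rightarrow> ('n,'a) vser. bastiani_smooth F \<and>
        (\<forall>u\<in>C0set. \<forall>\<gamma>. solves_evol u \<gamma> \<longrightarrow> F u = \<gamma> 1)"
  proof (intro exI[of _ "\<lambda>u. Dfun 0 u (\<lambda>_. undefined)"] conjI ballI allI impI)
    show "bastiani_smooth (\<lambda>u. Dfun 0 u (\<lambda>_. undefined) :: ('n,'a) vser)"
      unfolding bastiani_smooth_def
      by (intro exI[of _ Dfun] conjI allI impI ballI Dfun_cont Dfun_deriv refl) auto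
    fix u :: "real \<Rightarrow> ('n,'a) vser" and \<gamma> assume u: "u \<in> C0set" and sol: "solves_evol u \<gamma>"
    have "Dfun 0 u (\<lambda>_. undefined) = solg u 1"
      by (simp add: Dfun_def solg_def fun_eq_iff)
    also have "\<dots> = \<gamma> 1" using solves_unique[OF u sol] by (auto simp: fun_eq_iff)
    finally show "Dfun 0 u (\<lambda>_. undefined) = \<gamma> 1" .
  qed
qed

theorem proposition5p7:
  shows "C0_regular_G TYPE('n::finite) TYPE(real) \<and> C0_regular_G TYPE('n::finite) TYPE(complex)"
  using C0_regular_generic[where 'a=real and 'n='n] C0_regular_generic[where 'a=complex and 'n='n] by blast


end
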